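(* Let $n\ge1$. Let $\mathcal{H}=\mathcal{K}=\mathbb{C}^2$, with computational basis $\{|0\rangle,|1\rangle\}$ of $\mathcal{H}$ and an orthonormal basis $\{|+\rangle,|-\rangle\}$ of $\mathcal{K}$. For parameters $\theta_m\in[0,1]$, $\phi_m\in\mathbb{R}$, $\eta_m\in(0,1)$ ($m=0,\dots,n$), observations $q_0,\dots,q_n\in\mathcal{P}_1(\mathcal{K})$ and a state $\varphi_{H,0}$ on $M_2(\mathbb{C})$, define for $(p_0,\dots,p_n)\in\mathcal{P}_1(\mathcal{H})^{n+1}$ \[ F_n(p_0,\dots,p_n)=\varphi_{H,0}\Big(\mathcal{E}_{H;0}\big(\mathcal{E}_{H,O;0}(p_0\otimes q_0)\otimes\mathcal{E}_{H;1}(\mathcal{E}_{H,O;1}(p_1\otimes q_1)\otimes\cdots\otimes\mathcal{E}_{H;n}(\mathcal{E}_{H,O;n}(p_n\otimes q_n)\otimes\mathbb{I})\cdots)\big)\Big), \] with the maps $\mathcal{E}_{H;m},\mathcal{E}_{H,O;m}$ as in the context. Then there exist such parameters, observations and initial state with \[ \sup_{p_0,\dots,p_n\in\mathcal{P}_1(\mathcal{H})}F_n(p_0,\dots,p_n)>\sup_{p_0,\dots,p_n\in D_H}F_n(p_0,\dots,p_n),\qquad D_H=\{|0\rangle\langle0|,|1\rangle\langle1|\}, \] and moreover in any tuple $(p_0^*,\dots,p_n^* )$ attaining the supremum on the left, $p_0^*$ has a nonzero off-diagonal entry in the computational basis.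
   Context: $\mathcal{P}_1(\mathcal{H})$ is the set of rank-one orthogonal projections on $\mathcal{H}$. For each $m$: $\sigma_x=|0\rangle\langle1|+|1\rangle\langle0|$, $U_m=e^{-i\phi_m\sigma_x}$, $\Pi_Z(X)=|0\rangle\langle0|X|0\rangle\langle0|+|1\rangle\langle1|X|1\rangle\langle1|$, $\Phi_m(X)=(1-\theta_m)U_m^\dagger XU_m+\theta_m\Pi_Z(X)$, and $\mathcal{E}_{H;m}:M_2\otimes M_2\to M_2$, $\mathcal{E}_{H;m}(X_1\otimes X_2)=\Phi_m(X_1)\,\mathrm{tr}(X_2)$ with $\mathrm{tr}=\tfrac12\operatorname{Tr}$ the normalized trace. Let $L_m^+=\sqrt{1+\eta_m}\,|0\rangle\langle0|+\sqrt{1-\eta_m}\,|1\rangle\langle1|$, $L_m^-=\sqrt{1-\eta_m}\,|0\rangle\langle0|+\sqrt{1+\eta_m}\,|1\rangle\langle1|$, $W_m^\pm:\mathcal{H}\to\mathcal{H}\otimes\mathcal{K}$, $W_m^\pm\xi=L_m^\pm\xi\otimes|\pm\rangle$, and $\mathcal{E}_{H,O;m}(X)=(W_m^+)^\dagger XW_m^++(W_m^-)^\dagger XW_m^-$ for $X\in\mathcal{B}(\mathcal{H})\otimes\mathcal{B}(\mathcal{K})$; in particular $\mathcal{E}_{H,O;m}(A\otimes|\pm\rangle\langle\pm|)=L_m^\pm AL_m^\pm$. *)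

theory Defs
  imports "HOL-Analysis.Analysis"
begin

type_synonym cvec = "complex^2"
type_synonym cmat = "complex^2^2"
type_synonym tmat = "complex^(2\<times>2)^(2\<times>2)"

definition ket0 :: cvec where "ket0 = axis 0 1"
definition ket1 :: cvec where "ket1 = axis 1 1"

definition outer :: "complex^'n \<Rightarrow> complex^'n \<Rightarrow> complex^'n^'n" where
  "outer u v = (\<chi> i j. u$i * cnj (v$j))"

definition adj :: "complex^'n^'m \<Rightarrow> complex^'m^'n" where
  "adj A = (\<chi> i j. cnj (A$j$i))"

definition csmult :: "complex \<Rightarrow> complex^'n^'m \<Rightarrow> complex^'n^'m" where
  "csmult c A = (\<chi> i j. c * A$i$j)"

definition cinner :: "complex^'n \<Rightarrow> complex^'n \<Rightarrow> complex" where
  "cinner u v = (\<Sum>i\<in>UNIV. cnj (u$i) * v$i)"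

definition P1 :: "cmat set" where
  "P1 = {outer v v | v. norm v = 1}"

definition DH :: "cmat set" where
  "DH = {outer ket0 ket0, outer ket1 ket1}"

definition sigma_x :: cmat where
  "sigma_x = outer ket0 ket1 + outer ket1 ket0"

text \<open>U = exp(-i phi sigma_x) = cos phi I - i sin phi sigma_x (as sigma_x^2 = I)\<close>
definition Uop :: "real \<Rightarrow> cmat" where
  "Uop ph = csmult (complex_of_real (cos ph)) (mat 1) - csmult (\<i> * complex_of_real (sin ph)) sigma_x"

definition PiZ :: "cmat \<Rightarrow> cmat" where
  "PiZ X = outer ket0 ket0 ** X ** outer ket0 ket0 + outer ket1 ket1 ** X ** outer ket1 ket1"

definition Phi :: "real \<Rightarrow> real \<Rightarrow> cmat \<Rightarrow> cmat" where
  "Phi th ph X = (1 - th) *\<^sub>R (adj (Uop ph) ** X ** Uop ph) + th *\<^sub>R PiZ X"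

text \<open>Kronecker product of 2x2 matrices, M_2 \<otimes> M_2 = matrices indexed by 2\<times>2\<close>
definition kron :: "cmat \<Rightarrow> cmat \<Rightarrow> tmat" where
  "kron A B = (\<chi> ij kl. A$(fst ij)$(fst kl) * B$(snd ij)$(snd kl))"

definition ptr2 :: "tmat \<Rightarrow> cmat" where
  "ptr2 X = (\<chi> i k. (\<Sum>j\<in>UNIV. X$(i,j)$(k,j)) / 2)"

text \<open>E_{H;m}: linear extension of X1 \<otimes> X2 \<mapsto> Phi(X1) tr(X2)\<close>
definition EH :: "real \<Rightarrow> real \<Rightarrow> tmat \<Rightarrow> cmat" where
  "EH th ph X = Phi th ph (ptr2 X)"

definition Lp :: "real \<Rightarrow> cmat" where
  "Lp et = sqrt (1 + et) *\<^sub>R outer ket0 ket0 + sqrt (1 - et) *\<^sub>R outer ket1 ket1"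
definition Lm :: "real \<Rightarrow> cmat" where
  "Lm et = sqrt (1 - et) *\<^sub>R outer ket0 ket0 + sqrt (1 + et) *\<^sub>R outer ket1 ket1"

text \<open>isometry W: xi \<mapsto> L xi \<otimes> e, as a (2\<times>2) x 2 matrix\<close>
definition Wop :: "cmat \<Rightarrow> cvec \<Rightarrow> complex^2^(2\<times>2)" where
  "Wop L e = (\<chi> ij k. L$(fst ij)$k * e$(snd ij))"

definition EHO :: "real \<Rightarrow> cvec \<Rightarrow> cvec \<Rightarrow> tmat \<Rightarrow> cmat" where
  "EHO et ep em X = adj (Wop (Lp et) ep) ** X ** Wop (Lp et) ep
                  + adj (Wop (Lm et) em) ** X ** Wop (Lm et) em"

definition cstate :: "(cmat \<Rightarrow> complex) \<Rightarrow> bool" where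
  "cstate f \<longleftrightarrow> (\<forall>A B. f (A + B) = f A + f B) \<and> (\<forall>c A. f (csmult c A) = c * f A)
     \<and> (\<forall>A::cmat. Im (f (adj A ** A)) = 0 \<and> Re (f (adj A ** A)) \<ge> 0) \<and> f (mat 1) = 1"

primrec chain :: "(nat \<Rightarrow> real) \<Rightarrow> (nat \<Rightarrow> real) \<Rightarrow> (nat \<Rightarrow> real) \<Rightarrow> cvec \<Rightarrow> cvec
   \<Rightarrow> (nat \<Rightarrow> cmat) \<Rightarrow> (nat \<Rightarrow> cmat) \<Rightarrow> nat \<Rightarrow> nat \<Rightarrow> cmat" where
  "chain th ph et ep em q ps 0 m =
     EH (th m) (ph m) (kron (EHO (et m) ep em (kron (ps m) (q m))) (mat 1))"
| "chain th ph et ep em q ps (Suc r) m =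
     EH (th m) (ph m) (kron (EHO (et m) ep em (kron (ps m) (q m))) (chain th ph et ep em q ps r (Suc m)))"

definition Fn :: "nat \<Rightarrow> (nat \<Rightarrow> real) \<Rightarrow> (nat \<Rightarrow> real) \<Rightarrow> (nat \<Rightarrow> real) \<Rightarrow> cvec \<Rightarrow> cvec
   \<Rightarrow> (nat \<Rightarrow> cmat) \<Rightarrow> (cmat \<Rightarrow> complex) \<Rightarrow> (nat \<Rightarrow> cmat) \<Rightarrow> complex" where
  "Fn n th ph et ep em q phi0 ps = phi0 (chain th ph et ep em q ps n 0)"

end

theory Submission
  imports Defs
begin

lemma two_eq0: "(2::2) = 0" by simp
lemma UNIV2: "(UNIV::2 set) = {0,1}" using UNIV_2 two_eq0 by auto
lemma sum2: "(\<Sum>i\<in>(UNIV::2 set). f i) = f 0 + f 1" by (simp add: UNIV2)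
lemma sum22: "(\<Sum>ij\<in>(UNIV::(2\<times>2) set). f ij) = f (0,0) + f (0,1) + f (1,0) + f(1,1)"
  by (simp add: UNIV_Times_UNIV[symmetric] UNIV2 sum.cartesian_product[symmetric] add.assoc del: UNIV_Times_UNIV)
lemma all2: "(\<forall>i::2. P i) = (P 0 \<and> P 1)" by (metis UNIV2 UNIV_I insertE singletonD)
lemma vec2_eq: "(A::complex^2^2) = B \<longleftrightarrow> A$0$0 = B$0$0 \<and> A$0$1 = B$0$1 \<and> A$1$0 = B$1$0 \<and> A$1$1 = B$1$1"
  by (auto simp: vec_eq_iff all2)
lemma ax: "(axis (0::2) (1::complex))$0 = 1" "(axis (0::2) (1::complex))$1 = 0" "(axis (1::2) (1::complex))$0 = 0" "(axis (1::2) (1::complex))$1 = 1"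
  by (simp_all add: axis_def)

definition cq :: "cvec \<Rightarrow> cmat \<Rightarrow> complex" where
  "cq e q = (\<Sum>j\<in>UNIV. \<Sum>j'\<in>UNIV. cnj (e$j) * q$j$j' * e$j')"

lemma Phi00: "Phi 0 0 X = X"
  by (simp add: vec2_eq Phi_def Uop_def csmult_def adj_def matrix_matrix_mult_def sum2 mat_def)

lemma EH_kron: "EH 0 0 (kron A B) = csmult ((B$0$0 + B$1$1)/2) A"
  by (simp add: EH_def Phi00 vec2_eq ptr2_def kron_def csmult_def sum2 algebra_simps)

lemma Lp_ent: "Lp et $0$0 = sqrt(1+et)" "Lp et $0$1 = 0" "Lp et $1$0 = 0" "Lp et $1$1 = sqrt(1-et)"
  by (simp_all add: Lp_def outer_def ket0_def ket1_def ax of_real_def)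
lemma Lm_ent: "Lm et $0$0 = sqrt(1-et)" "Lm et $0$1 = 0" "Lm et $1$0 = 0" "Lm et $1$1 = sqrt(1+et)"
  by (simp_all add: Lm_def outer_def ket0_def ket1_def ax of_real_def)

lemma EHO_kron: "EHO et ep em (kron p q) = (\<chi> k l. (Lp et$k$k * Lp et$l$l * cq ep q + Lm et$k$k * Lm et$l$l * cq em q) * p$k$l)"
  unfolding vec2_eq
  apply (simp add: EHO_def matrix_matrix_mult_def adj_def Wop_def kron_def sum22 sum2 Lp_ent Lm_ent cq_def del: of_real_mult)
  apply (intro conjI; algebra)
  done

definition Ym :: "cmat \<Rightarrow> cmat" where
  "Ym p = (\<chi> k l. (if k = l then 1 else 4/5) * p$k$l)"

lemma sq85: "sqrt (8/5) * sqrt (2/5) = (4/5::real)"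
proof -
  have "sqrt (8/5) * sqrt (2/5) = sqrt ((4/5)^2::real)" by (simp add: real_sqrt_mult[symmetric] power2_eq_square)
  then show ?thesis by simp
qed

lemma sq85b: "sqrt (8/5) * sqrt (8/5) = (8/5::real)" "sqrt (2/5) * sqrt (2/5) = (2/5::real)"
  by simp_all

lemma EHO_Y: assumes "cq ep q = 1/2" "cq em q = 1/2"
  shows "EHO (3/5) ep em (kron p q) = Ym p"
proof -
  have a: "(1 + 3/5::real) = 8/5" "(1 - 3/5::real) = 2/5" by simp_all
  have b1: "complex_of_real (sqrt (8/5)) * complex_of_real (sqrt (2/5)) = 4/5"
    by (simp only: of_real_mult[symmetric] sq85) simp
  have b2: "complex_of_real (sqrt (2/5)) * complex_of_real (sqrt (8/5)) = 4/5"
    by (simp only: of_real_mult[symmetric] sq85 mult.commute[of "sqrt (2/5)"]) simp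
  have b3: "complex_of_real (sqrt (8/5)) * complex_of_real (sqrt (8/5)) = 8/5"
    by (simp only: of_real_mult[symmetric] sq85b) simp
  have b4: "complex_of_real (sqrt (2/5)) * complex_of_real (sqrt (2/5)) = 2/5"
    by (simp only: of_real_mult[symmetric] sq85b) simp
  note b = b1 b2 b3 b4
  show ?thesis
    unfolding EHO_kron vec2_eq Ym_def
    apply (simp only: vec_lambda_beta Lp_ent Lm_ent assms)
    apply (simp add: b del: of_real_mult)
    done
qed

definition tr2 :: "cmat \<Rightarrow> complex" where "tr2 A = A$0$0 + A$1$1"

lemma tr2_Y: "tr2 (Ym p) = tr2 p" by (simp add: tr2_def Ym_def)
lemma tr2_cs: "tr2 (csmult c A) = c * tr2 A" by (simp add: tr2_def csmult_def algebra_simps)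

lemma chain_formula:
  assumes "cq ep q0 = 1/2" "cq em q0 = 1/2"
  shows "(\<forall>k. m \<le> k \<and> k \<le> m + r \<longrightarrow> tr2 (ps k) = 1) \<Longrightarrow>
    chain (\<lambda>_. 0) (\<lambda>_. 0) (\<lambda>_. 3/5) ep em (\<lambda>_. q0) ps r m = csmult ((1/2)^r) (Ym (ps m))"
proof (induction r arbitrary: m)
  case 0
  then show ?case
    by (simp add: EH_kron EHO_Y assms vec2_eq csmult_def mat_def)
next
  case (Suc r)
  have ih: "chain (\<lambda>_. 0) (\<lambda>_. 0) (\<lambda>_. 3/5) ep em (\<lambda>_. q0) ps r (Suc m) = csmult ((1/2)^r) (Ym (ps (Suc m)))"
    using Suc.prems by (intro Suc.IH) auto
  have t: "tr2 (ps (Suc m)) = 1" using Suc.prems by auto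
  have "tr2 (chain (\<lambda>_. 0) (\<lambda>_. 0) (\<lambda>_. 3/5) ep em (\<lambda>_. q0) ps r (Suc m)) = (1/2)^r"
    unfolding ih tr2_cs tr2_Y t by simp
  then have "(chain (\<lambda>_. 0) (\<lambda>_. 0) (\<lambda>_. 3/5) ep em (\<lambda>_. q0) ps r (Suc m))$0$0 + (chain (\<lambda>_. 0) (\<lambda>_. 0) (\<lambda>_. 3/5) ep em (\<lambda>_. q0) ps r (Suc m))$1$1 = (1/2)^r"
    by (simp add: tr2_def)
  then show ?case
    by (simp add: EH_kron EHO_Y assms vec2_eq csmult_def)
qed



lemma norm2_sq: "(norm (u::cvec))^2 = (cmod (u$0))^2 + (cmod (u$1))^2"
  by (simp add: norm_vec_def L2_set_def sum2)

lemma cns: "(complex_of_real (cmod z))^2 = z * cnj z"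
  using complex_norm_square[of z] by simp

lemma cinner_self: "cinner (u::cvec) u = of_real ((norm u)^2)"
  unfolding cinner_def sum2 norm2_sq by (simp add: cns mult.commute)

lemma cinner_swap: "cinner (v::cvec) u = cnj (cinner u v)"
  unfolding cinner_def sum2 by (simp add: mult.commute)

lemma cq_outer: "cq e (outer (v::cvec) v) = cinner e v * cnj (cinner e v)"
  unfolding cq_def outer_def cinner_def sum2 by (simp add: algebra_simps)

lemma cinner_lin: "cinner (e::cvec) (c *\<^sub>R (a + b)) = of_real c * (cinner e a + cinner e b)"
  unfolding cinner_def sum2 vector_add_component vector_scaleR_component by (simp add: scaleR_conv_of_real algebra_simps)

lemma P1_facts: assumes "p \<in> P1"
  shows "tr2 p = 1" "p$0$1 + p$1$0 = of_real (2 * Re (p$0$1))" "Re (p$0$1) \<le> 1/2"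
proof -
  obtain u where u: "p = outer u u" "norm u = 1" using assms unfolding P1_def by auto
  have n: "(cmod (u$0))^2 + (cmod (u$1))^2 = 1" by (metis u(2) norm2_sq power_one)
  have n': "(complex_of_real (cmod (u$0)))^2 + (complex_of_real (cmod (u$1)))^2 = 1"
    using arg_cong[OF n, of complex_of_real] by simp
  show "tr2 p = 1" using n'
    by (simp add: u tr2_def outer_def complex_norm_square[symmetric] of_real_add[symmetric] del: of_real_add)
  show "p$0$1 + p$1$0 = of_real (2 * Re (p$0$1))"
    by (simp add: u outer_def complex_eq_iff)
  have r: "Re (p$0$1) = Re (u$0) * Re (u$1) + Im (u$0) * Im (u$1)"
    by (simp add: u outer_def)
  have "0 \<le> (Re (u$0) - Re (u$1))^2 + (Im (u$0) - Im (u$1))^2" by simp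
  then show "Re (p$0$1) \<le> 1/2" using n unfolding r cmod_power2 power2_diff by linarith
qed



lemma cinner_lin1: "cinner (c *\<^sub>R (a + b)) (e::cvec) = of_real c * (cinner a e + cinner b e)"
  unfolding cinner_def sum2 vector_add_component vector_scaleR_component by (simp add: scaleR_conv_of_real algebra_simps)

definition PHI0 :: "cmat \<Rightarrow> complex" where "PHI0 Y = (Y$0$0 + Y$0$1 + Y$1$0 + Y$1$1)/2"

lemma PHI0_state: "cstate PHI0"
proof -
  have pos: "PHI0 (adj A ** A) = of_real (((cmod (A$0$0 + A$0$1))^2 + (cmod (A$1$0 + A$1$1))^2)/2)" for A :: cmat
    unfolding PHI0_def matrix_matrix_mult_def adj_def sum2
    by (simp add: cns algebra_simps)
  show ?thesis unfolding cstate_def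
    apply (intro conjI allI)
    apply (simp add: PHI0_def add_divide_distrib)
    apply (simp add: PHI0_def csmult_def algebra_simps)
    apply (simp only: pos Im_complex_of_real)
    apply (simp only: pos Re_complex_of_real; simp)
    apply (simp add: PHI0_def mat_def)
    done
qed

lemma v_facts: assumes "norm ep = 1" "norm em = 1" "cinner ep em = 0"
  shows "norm ((1/sqrt 2) *\<^sub>R (ep + em)) = 1" "cq ep (outer ((1/sqrt 2) *\<^sub>R (ep + em)) ((1/sqrt 2) *\<^sub>R (ep + em))) = 1/2"
    "cq em (outer ((1/sqrt 2) *\<^sub>R (ep + em)) ((1/sqrt 2) *\<^sub>R (ep + em))) = 1/2"
proof -
  let ?v = "(1/sqrt 2) *\<^sub>R (ep + em)"
  have ee: "cinner ep ep = 1" "cinner em em = 1" using assms by (simp_all add: cinner_self)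
  have me: "cinner em ep = 0" using assms(3) cinner_swap by (metis complex_cnj_zero)
  have s2: "complex_of_real (1/sqrt 2) * complex_of_real (1/sqrt 2) = 1/2"
    by (simp only: of_real_mult[symmetric]) simp
  have s3: "complex_of_real (sqrt 2) * complex_of_real (sqrt 2) = 2"
    by (simp only: of_real_mult[symmetric]) simp
  have "cinner ?v ?v = 1"
    unfolding cinner_lin1 cinner_lin ee me assms(3) by (simp add: s3 algebra_simps)
  then have "of_real ((norm ?v)^2) = (1::complex)" by (simp add: cinner_self)
  then have "(norm ?v)^2 = 1" using of_real_eq_1_iff by blast
  then have "sqrt ((norm ?v)^2) = 1" by simp
  then show "norm ?v = 1" by (simp only: real_sqrt_abs abs_norm_cancel)
  show "cq ep (outer ?v ?v) = 1/2"
    unfolding cq_outer cinner_lin ee me assms(3) using s2 by simp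
  show "cq em (outer ?v ?v) = 1/2"
    unfolding cq_outer cinner_lin ee me assms(3) using s2 by simp
qed



lemma Fn_formula:
  assumes "cq ep q0 = 1/2" "cq em q0 = 1/2" "\<forall>m\<le>n. ps m \<in> P1"
  shows "Re (Fn n (\<lambda>_. 0) (\<lambda>_. 0) (\<lambda>_. 3/5) ep em (\<lambda>_. q0) PHI0 ps) = (1/2)^n * (1 + 8/5 * Re (ps 0 $0$1)) / 2"
proof -
  have tr: "\<forall>k. 0 \<le> k \<and> k \<le> 0 + n \<longrightarrow> tr2 (ps k) = 1" using assms(3) P1_facts(1) by auto
  have c: "chain (\<lambda>_. 0) (\<lambda>_. 0) (\<lambda>_. 3/5) ep em (\<lambda>_. q0) ps n 0 = csmult ((1/2)^n) (Ym (ps 0))"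
    using chain_formula[OF assms(1,2) tr] .
  have p0: "ps 0 \<in> P1" using assms(3) by auto
  have t: "ps 0 $0$0 + ps 0 $1$1 = 1" using P1_facts(1)[OF p0] by (simp add: tr2_def)
  have o: "ps 0 $0$1 + ps 0 $1$0 = of_real (2 * Re (ps 0 $0$1))" using P1_facts(2)[OF p0] .
  have "Fn n (\<lambda>_. 0) (\<lambda>_. 0) (\<lambda>_. 3/5) ep em (\<lambda>_. q0) PHI0 ps
      = (1/2)^n * ((ps 0 $0$0 + ps 0 $1$1) + 4/5 * (ps 0 $0$1 + ps 0 $1$0)) / 2"
    unfolding Fn_def c by (simp add: PHI0_def csmult_def Ym_def algebra_simps)
  also have "\<dots> = of_real ((1/2)^n * (1 + 8/5 * Re (ps 0 $0$1)) / 2)"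
    unfolding t o by simp
  finally show ?thesis by (simp only: Re_complex_of_real)
qed


lemma DH_sub: "DH \<subseteq> P1"
proof -
  have "norm ket0 = 1" "norm ket1 = 1" by (simp_all add: norm2_sq ket0_def ket1_def ax norm_vec_def L2_set_def sum2)
  then show ?thesis unfolding DH_def P1_def by auto
qed

lemma DH_off: "p \<in> DH \<Longrightarrow> p $0$1 = 0"
  by (auto simp: DH_def outer_def ket0_def ket1_def ax)

definition wst :: cvec where "wst = (\<chi> i. complex_of_real (1/sqrt 2))"

lemma pstar: "outer wst wst \<in> P1"
   "Re ((outer wst wst) $0$1) = 1/2"
proof -
  have "(norm wst)^2 = 1"
    unfolding norm2_sq by (simp add: wst_def power_divide norm_divide)
  then have "norm wst = 1"
    by (metis abs_norm_cancel real_sqrt_abs real_sqrt_one)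
  then show "outer wst wst \<in> P1"
    unfolding P1_def by blast
  show "Re ((outer wst wst) $0$1) = 1/2"
    by (simp add: outer_def wst_def)
qed

theorem mainTheorem3:
  fixes n :: nat and ep em :: "complex^2"
  assumes "n \<ge> 1" and "norm ep = 1" and "norm em = 1" and "cinner ep em = 0"
  shows "\<exists>(th::nat \<Rightarrow> real) (ph::nat \<Rightarrow> real) (et::nat \<Rightarrow> real) (q::nat \<Rightarrow> cmat) (phi0::cmat \<Rightarrow> complex).
     (\<forall>m\<le>n. 0 \<le> th m \<and> th m \<le> 1 \<and> 0 < et m \<and> et m < 1 \<and> q m \<in> P1) \<and> cstate phi0 \<and>
     Sup {Re (Fn n th ph et ep em q phi0 ps) | ps. \<forall>m\<le>n. ps m \<in> P1}
       > Sup {Re (Fn n th ph et ep em q phi0 ps) | ps. \<forall>m\<le>n. ps m \<in> DH} \<and>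
     (\<forall>ps. (\<forall>m\<le>n. ps m \<in> P1) \<and>
        Re (Fn n th ph et ep em q phi0 ps) = Sup {Re (Fn n th ph et ep em q phi0 ps') | ps'. \<forall>m\<le>n. ps' m \<in> P1}
        \<longrightarrow> ps 0 $ 0 $ 1 \<noteq> 0)"
proof -
  define v where "v = (1/sqrt 2) *\<^sub>R (ep + em)"
  define q0 where "q0 = outer v v"
  have nv: "norm v = 1" and c1: "cq ep q0 = 1/2" and c2: "cq em q0 = 1/2"
    using v_facts[OF assms(2-4)] unfolding v_def q0_def by auto
  have q0P: "q0 \<in> P1" unfolding q0_def P1_def using nv by blast
  define F where "F ps = Re (Fn n (\<lambda>_. 0) (\<lambda>_. 0) (\<lambda>_. 3/5) ep em (\<lambda>_. q0) PHI0 ps)" for ps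
  have Ff: "F ps = (1/2)^n * (1 + 8/5 * Re (ps 0 $0$1)) / 2" if "\<forall>m\<le>n. ps m \<in> P1" for ps
    unfolding F_def using Fn_formula[OF c1 c2 that] .
  define M :: real where "M = (1/2)^n * (1 + 8/5 * (1/2)) / 2"
  define c :: real where "c = (1/2)^n * (1 + 8/5 * 0) / 2"
  define pst where "pst = outer wst wst"
  have S1: "Sup {F ps | ps. \<forall>m\<le>n. ps m \<in> P1} = M"
  proof (rule cSup_eq_maximum)
    show "M \<in> {F ps | ps. \<forall>m\<le>n. ps m \<in> P1}"
    proof -
      have "\<forall>m\<le>n. (\<lambda>_. pst) m \<in> P1" using pstar(1) unfolding pst_def by simp
      moreover have "F (\<lambda>_. pst) = M" using Ff[OF calculation] pstar(2) unfolding pst_def M_def by simp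
      ultimately show ?thesis by force
    qed
    show "x \<le> M" if xin: "x \<in> {F ps | ps. \<forall>m\<le>n. ps m \<in> P1}" for x
    proof -
      obtain ps where ps: "x = F ps" "\<forall>m\<le>n. ps m \<in> P1" using xin by auto
      have "Re (ps 0 $0$1) \<le> 1/2" using P1_facts(3) ps(2) by auto
      then show ?thesis unfolding ps(1) Ff[OF ps(2)] M_def
        by (simp add: divide_right_mono mult_left_mono)
    qed
  qed
  have S2: "{F ps | ps. \<forall>m\<le>n. ps m \<in> DH} = {c}"
  proof
    show "{F ps | ps. \<forall>m\<le>n. ps m \<in> DH} \<subseteq> {c}"
    proof
      fix x assume "x \<in> {F ps | ps. \<forall>m\<le>n. ps m \<in> DH}"
      then obtain ps where ps: "x = F ps" "\<forall>m\<le>n. ps m \<in> DH" by auto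
      have ps': "\<forall>m\<le>n. ps m \<in> P1" using ps(2) DH_sub by auto
      have "ps 0 $0$1 = 0" using ps(2) DH_off by auto
      then show "x \<in> {c}" unfolding ps(1) Ff[OF ps'] c_def by simp
    qed
    show "{c} \<subseteq> {F ps | ps. \<forall>m\<le>n. ps m \<in> DH}"
    proof -
      have d: "\<forall>m\<le>n. (\<lambda>_. outer ket0 ket0) m \<in> DH" by (simp add: DH_def)
      have d': "\<forall>m\<le>n. (\<lambda>_. outer ket0 ket0) m \<in> P1" using d DH_sub by auto
      have "F (\<lambda>_. outer ket0 ket0) = c" using Ff[OF d'] DH_off[of "outer ket0 ket0"] unfolding c_def
        by (simp add: DH_def)
      then show ?thesis using d by force
    qed
  qed
  have Mc: "c < M" unfolding M_def c_def by simp
  show ?thesis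
  proof (intro exI conjI)
    show "\<forall>m\<le>n. 0 \<le> (\<lambda>_::nat. 0::real) m \<and> (\<lambda>_::nat. 0::real) m \<le> 1 \<and> 0 < (\<lambda>_::nat. 3/5::real) m \<and> (\<lambda>_::nat. 3/5::real) m < 1 \<and> (\<lambda>_. q0) m \<in> P1"
      using q0P by simp
    show "cstate PHI0" by (rule PHI0_state)
    show "Sup {Re (Fn n (\<lambda>_. 0) (\<lambda>_. 0) (\<lambda>_. 3/5) ep em (\<lambda>_. q0) PHI0 ps) | ps. \<forall>m\<le>n. ps m \<in> P1}
       > Sup {Re (Fn n (\<lambda>_. 0) (\<lambda>_. 0) (\<lambda>_. 3/5) ep em (\<lambda>_. q0) PHI0 ps) | ps. \<forall>m\<le>n. ps m \<in> DH}"
      using S1 S2 Mc unfolding F_def by simp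
    show "\<forall>ps. (\<forall>m\<le>n. ps m \<in> P1) \<and>
        Re (Fn n (\<lambda>_. 0) (\<lambda>_. 0) (\<lambda>_. 3/5) ep em (\<lambda>_. q0) PHI0 ps) = Sup {Re (Fn n (\<lambda>_. 0) (\<lambda>_. 0) (\<lambda>_. 3/5) ep em (\<lambda>_. q0) PHI0 ps') | ps'. \<forall>m\<le>n. ps' m \<in> P1}
        \<longrightarrow> ps 0 $ 0 $ 1 \<noteq> 0"
    proof (intro allI impI notI)
      fix ps assume h: "(\<forall>m\<le>n. ps m \<in> P1) \<and>
        Re (Fn n (\<lambda>_. 0) (\<lambda>_. 0) (\<lambda>_. 3/5) ep em (\<lambda>_. q0) PHI0 ps) = Sup {Re (Fn n (\<lambda>_. 0) (\<lambda>_. 0) (\<lambda>_. 3/5) ep em (\<lambda>_. q0) PHI0 ps') | ps'. \<forall>m\<le>n. ps' m \<in> P1}"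
        and z: "ps 0 $ 0 $ 1 = 0"
      have "F ps = M" using h S1 unfolding F_def by simp
      moreover have "F ps = c" using Ff[of ps] h z unfolding c_def by simp
      ultimately show False using Mc by simp
    qed
  qed
qed

end
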